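(* Let $\{a_i\},\{b_i\},\{c_i\},\{d_i\}$ ($i\in\mathbb{Z}$) be complex sequences and $m,n\ge0$ integers such that $a_j-c_j$, $a_j-d_j$, $b_j-c_j$, $b_j-d_j$ are nonzero for $-n\le j\le m$. Then $$\sum_{k=-n}^{m}(a_k-b_k)(c_k-d_k)\frac{\prod_{j=1}^{k-1}(a_j-c_j)}{\prod_{j=1}^{k}(a_j-d_j)}\frac{\prod_{j=1}^{k-1}(b_j-d_j)}{\prod_{j=1}^{k}(b_j-c_j)} =\frac{\prod_{j=1}^{m}(a_j-c_j)}{\prod_{j=1}^{m}(a_j-d_j)}\frac{\prod_{j=1}^{m}(b_j-d_j)}{\prod_{j=1}^{m}(b_j-c_j)}-\frac{\prod_{j=-n}^{0}(a_j-d_j)}{\prod_{j=-n}^{0}(a_j-c_j)}\frac{\prod_{j=-n}^{0}(b_j-c_j)}{\prod_{j=-n}^{0}(b_j-d_j)}.$$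
   Context: Products over integer ranges follow the convention: $\prod_{j=k}^{m}A_j=A_k\cdots A_m$ if $m\ge k$; $=1$ if $m=k-1$; $=(A_{m+1}\cdots A_{k-1})^{-1}$ if $m\le k-2$. *)

theory Defs
  imports Complex_Main
begin

definition prodZ :: "(int \<Rightarrow> complex) \<Rightarrow> int \<Rightarrow> int \<Rightarrow> complex" where
  "prodZ A k m = (if m \<ge> k - 1 then (\<Prod>j\<in>{k..m}. A j)
                  else inverse (\<Prod>j\<in>{m+1..k-1}. A j))"

end

theory Submission
  imports Defs
begin

lemma prodZ_step:
  assumes "A k \<noteq> 0"
  shows "prodZ A 1 k = prodZ A 1 (k - 1) * A k"
proof (cases "k \<ge> 1")
  case True
  have "{1..k} = insert k {1..k-1}" using True by auto
  then show ?thesis using True by (simp add: prodZ_def mult.commute)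
next
  case False
  show ?thesis
  proof (cases "k = 0")
    case True
    then show ?thesis using assms by (simp add: prodZ_def)
  next
    case False2: False
    have "{k..0} = insert k {k+1..0}" using False False2 by auto
    then have "(\<Prod>j\<in>{k..0}. A j) = A k * (\<Prod>j\<in>{k+1..0}. A j)" by simp
    then show ?thesis using False False2 assms by (simp add: prodZ_def)
  qed
qed

lemma prodZ_neg:
  assumes "n \<ge> 0"
  shows "prodZ A 1 (-n-1) = inverse (prodZ A (-n) 0)"
  using assms by (simp add: prodZ_def)

lemma telescope_int:
  fixes T :: "int \<Rightarrow> complex"
  assumes "m \<ge> lo - 1"
  shows "(\<Sum>k\<in>{lo..m}. T k - T (k - 1)) = T m - T (lo - 1)"
  using assms
proof (induction m rule: int_ge_induct)
  case base
  then show ?case by simp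
next
  case (step i)
  have "{lo..i+1} = insert (i+1) {lo..i}" using step by auto
  then show ?case using step by simp
qed

theorem corollary3p4:
  fixes a b c d :: "int \<Rightarrow> complex" and m n :: int
  assumes "m \<ge> 0" and "n \<ge> 0"
    and "\<And>j. -n \<le> j \<Longrightarrow> j \<le> m \<Longrightarrow>
           a j - c j \<noteq> 0 \<and> a j - d j \<noteq> 0 \<and> b j - c j \<noteq> 0 \<and> b j - d j \<noteq> 0"
  shows "(\<Sum>k\<in>{-n..m}. (a k - b k) * (c k - d k)
            * (prodZ (\<lambda>j. a j - c j) 1 (k - 1) / prodZ (\<lambda>j. a j - d j) 1 k)
            * (prodZ (\<lambda>j. b j - d j) 1 (k - 1) / prodZ (\<lambda>j. b j - c j) 1 k))
       = (prodZ (\<lambda>j. a j - c j) 1 m / prodZ (\<lambda>j. a j - d j) 1 m)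
           * (prodZ (\<lambda>j. b j - d j) 1 m / prodZ (\<lambda>j. b j - c j) 1 m)
         - (prodZ (\<lambda>j. a j - d j) (-n) 0 / prodZ (\<lambda>j. a j - c j) (-n) 0)
           * (prodZ (\<lambda>j. b j - c j) (-n) 0 / prodZ (\<lambda>j. b j - d j) (-n) 0)"
proof -
  define T where "T k = (prodZ (\<lambda>j. a j - c j) 1 k / prodZ (\<lambda>j. a j - d j) 1 k)
           * (prodZ (\<lambda>j. b j - d j) 1 k / prodZ (\<lambda>j. b j - c j) 1 k)" for k
  have trm: "(a k - b k) * (c k - d k)
            * (prodZ (\<lambda>j. a j - c j) 1 (k - 1) / prodZ (\<lambda>j. a j - d j) 1 k)
            * (prodZ (\<lambda>j. b j - d j) 1 (k - 1) / prodZ (\<lambda>j. b j - c j) 1 k)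
          = T k - T (k - 1)" if k: "k \<in> {-n..m}" for k
  proof -
    from k assms(3) have nz: "a k - c k \<noteq> 0" "a k - d k \<noteq> 0" "b k - c k \<noteq> 0" "b k - d k \<noteq> 0"
      by auto
    define X where "X = prodZ (\<lambda>j. a j - c j) 1 (k - 1)"
    define Y where "Y = prodZ (\<lambda>j. a j - d j) 1 (k - 1)"
    define Z where "Z = prodZ (\<lambda>j. b j - d j) 1 (k - 1)"
    define W where "W = prodZ (\<lambda>j. b j - c j) 1 (k - 1)"
    have e1: "prodZ (\<lambda>j. a j - c j) 1 k = X * (a k - c k)"
      unfolding X_def using prodZ_step[where A="\<lambda>j. a j - c j" and k=k] nz by simp
    have e2: "prodZ (\<lambda>j. a j - d j) 1 k = Y * (a k - d k)"
      unfolding Y_def using prodZ_step[where A="\<lambda>j. a j - d j" and k=k] nz by simp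
    have e3: "prodZ (\<lambda>j. b j - d j) 1 k = Z * (b k - d k)"
      unfolding Z_def using prodZ_step[where A="\<lambda>j. b j - d j" and k=k] nz by simp
    have e4: "prodZ (\<lambda>j. b j - c j) 1 k = W * (b k - c k)"
      unfolding W_def using prodZ_step[where A="\<lambda>j. b j - c j" and k=k] nz by simp
    have "(a k - b k) * (c k - d k) * (X / (Y * (a k - d k))) * (Z / (W * (b k - c k)))
        = X * (a k - c k) / (Y * (a k - d k)) * (Z * (b k - d k) / (W * (b k - c k))) - X / Y * (Z / W)"
    proof (cases "Y = 0 \<or> W = 0")
      case True then show ?thesis by auto
    next
      case False
      define D where "D = Y * (a k - d k) * (W * (b k - c k))"
      have D0: "D \<noteq> 0" using False nz unfolding D_def by auto
      have l: "(a k - b k) * (c k - d k) * (X / (Y * (a k - d k))) * (Z / (W * (b k - c k)))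
          = ((a k - b k) * (c k - d k) * X * Z) / D" unfolding D_def by simp
      have r: "X * (a k - c k) / (Y * (a k - d k)) * (Z * (b k - d k) / (W * (b k - c k))) - X / Y * (Z / W)
          = (X * (a k - c k) * Z * (b k - d k) - X * Z * (a k - d k) * (b k - c k)) / D"
        unfolding D_def using False nz by (simp add: divide_simps)
      have n: "(a k - b k) * (c k - d k) * X * Z = X * (a k - c k) * Z * (b k - d k) - X * Z * (a k - d k) * (b k - c k)"
        by (simp add: algebra_simps)
      show ?thesis using l r n by simp
    qed
    then show ?thesis unfolding T_def using e1 e2 e3 e4 X_def Y_def Z_def W_def by simp
  qed
  have "(\<Sum>k\<in>{-n..m}. (a k - b k) * (c k - d k)
            * (prodZ (\<lambda>j. a j - c j) 1 (k - 1) / prodZ (\<lambda>j. a j - d j) 1 k)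
            * (prodZ (\<lambda>j. b j - d j) 1 (k - 1) / prodZ (\<lambda>j. b j - c j) 1 k))
       = (\<Sum>k\<in>{-n..m}. T k - T (k - 1))" using trm by (rule sum.cong[OF refl])
  also have "\<dots> = T m - T (-n - 1)" using telescope_int[of "-n" m T] assms by simp
  also have "T (-n - 1) = (prodZ (\<lambda>j. a j - d j) (-n) 0 / prodZ (\<lambda>j. a j - c j) (-n) 0)
           * (prodZ (\<lambda>j. b j - c j) (-n) 0 / prodZ (\<lambda>j. b j - d j) (-n) 0)"
    unfolding T_def using assms(2) by (simp add: prodZ_neg divide_inverse mult.commute)
  finally show ?thesis unfolding T_def by simp
qed

end
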